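(* Let $(X,d)$ be a complete metric space with $|X|\geqslant 3$ and let $T\colon X\to X$ be continuous and asymptotically regular. Suppose there exist an upper semi-continuous function $\varphi\colon[0,\infty)\to[0,\infty)$ with $\varphi(t)<t$ for all $t>0$, and a function $F\colon[0,\infty)^3\to[0,\infty)$ with $F(0,0,0)=0$ and $F$ continuous at $(0,0,0)$, such that $$d(Tx,Ty)+d(Ty,Tz)+d(Tx,Tz)\leqslant \varphi\big(\max\{d(x,y),d(y,z),d(z,x)\}\big)+F\big(d(x,Tx),d(y,Ty),d(z,Tz)\big)$$ for all pairwise distinct $x,y,z\in X$. Then $T$ has a fixed point, and $T$ has at most two fixed points.
   Context: A mapping $T\colon X\to X$ on a metric space is asymptotically regular if $\lim_{n\to\infty}d(T^{n+1}x,T^nx)=0$ for every $x\in X$. *)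

theory Defs
  imports "HOL-Analysis.Analysis"
begin

definition asymptotically_regular :: "('a::metric_space \<Rightarrow> 'a) \<Rightarrow> bool" where
  "asymptotically_regular T \<longleftrightarrow>
     (\<forall>x. (\<lambda>n. dist ((T ^^ Suc n) x) ((T ^^ n) x)) \<longlonglongrightarrow> 0)"

definition usc_nonneg :: "(real \<Rightarrow> real) \<Rightarrow> bool" where
  "usc_nonneg \<phi> \<longleftrightarrow>
     (\<forall>t\<ge>0. \<forall>e>0. \<exists>\<delta>>0. \<forall>s\<ge>0. \<bar>s - t\<bar> < \<delta> \<longrightarrow> \<phi> s < \<phi> t + e)"

definition cont_at_origin3 :: "(real \<Rightarrow> real \<Rightarrow> real \<Rightarrow> real) \<Rightarrow> bool" where
  "cont_at_origin3 F \<longleftrightarrow>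
     ((\<lambda>(a,b,c). F a b c) \<longlongrightarrow> F 0 0 0) (at (0,0,0) within {0..} \<times> {0..} \<times> {0..})"

end

theory Submission
  imports Defs
begin

lemma fin3:
  assumes "\<not>(\<exists>a b c. distinct [a,b,c] \<and> a\<in>S \<and> b\<in>S \<and> c\<in>S)"
  shows "finite S \<and> card S \<le> 2"
proof (rule ccontr)
  assume H: "\<not> (finite S \<and> card S \<le> 2)"
  have "\<exists>B. finite B \<and> card B = 3 \<and> B \<subseteq> S"
  proof (cases "finite S")
    case True
    then have "3 \<le> card S" using H by auto
    then show ?thesis using obtain_subset_with_card_n by metis
  next
    case False
    then show ?thesis using infinite_arbitrarily_large by blast
  qed
  then obtain B where "card B = 3" "B \<subseteq> S" by blast
  then obtain x y z where "B = {x,y,z}" "x \<noteq> y" "y \<noteq> z" "x \<noteq> z"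
    unfolding card_3_iff by blast
  then show False using assms \<open>B \<subseteq> S\<close> by auto
qed

lemma F_small:
  assumes "cont_at_origin3 F" "F 0 0 0 = 0" "\<gamma> > 0"
  shows "\<exists>\<rho>>0. \<forall>a b c. 0\<le>a \<longrightarrow> a<\<rho> \<longrightarrow> 0\<le>b \<longrightarrow> b<\<rho> \<longrightarrow> 0\<le>c \<longrightarrow> c<\<rho> \<longrightarrow> F a b c < \<gamma>"
proof -
  have "((\<lambda>(a,b,c). F a b c) \<longlongrightarrow> 0) (at (0,0,0) within {0..} \<times> {0..} \<times> {0..})"
    using assms by (simp add: cont_at_origin3_def)
  then have "eventually (\<lambda>p. dist ((\<lambda>(a,b,c). F a b c) p) 0 < \<gamma>) (at (0,0,0) within {0..} \<times> {0..} \<times> {0..})"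
    using tendstoD assms(3) by blast
  then obtain d where d: "d > 0" and hd: "\<forall>p\<in>{0..} \<times> {0..} \<times> {0..}. p \<noteq> (0,0,0) \<and> dist p (0,0,0) < d
      \<longrightarrow> dist ((\<lambda>(a,b,c). F a b c) p) 0 < \<gamma>"
    unfolding eventually_at by blast
  show ?thesis
  proof (intro exI[of _ "d/3"] conjI allI impI)
    show "d/3 > 0" using d by simp
    fix a b c :: real
    assume a: "0\<le>a" "a<d/3" and b: "0\<le>b" "b<d/3" and c: "0\<le>c" "c<d/3"
    show "F a b c < \<gamma>"
    proof (cases "(a,b,c) = (0,0,0)")
      case True then show ?thesis using assms by simp
    next
      case False
      have "norm (a,b,c) \<le> norm a + norm (b,c)" by (rule norm_Pair_le)
      also have "\<dots> \<le> norm a + (norm b + norm c)" using norm_Pair_le[of b c] by simp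
      finally have "norm (a,b,c) < d" using a b c by simp
      then have "dist (a,b,c) (0,0,0) < d" by (simp add: dist_norm)
      then have "dist (F a b c) 0 < \<gamma>" using hd False a b c by auto
      then show ?thesis by simp
    qed
  qed
qed

lemma orbit_cauchy:
  fixes T :: "'a::metric_space \<Rightarrow> 'a"
  assumes nofix: "\<forall>x. T x \<noteq> x"
    and asreg: "asymptotically_regular T"
    and phi_usc: "usc_nonneg \<phi>"
    and phi_less: "\<forall>t>0. \<phi> t < t"
    and Fsm: "\<forall>\<gamma>>0. \<exists>\<rho>>0. \<forall>a b c. 0\<le>a \<longrightarrow> a<\<rho> \<longrightarrow> 0\<le>b \<longrightarrow> b<\<rho> \<longrightarrow> 0\<le>c \<longrightarrow> c<\<rho> \<longrightarrow> F a b c < \<gamma>"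
    and contr: "\<forall>x y z. distinct [x, y, z] \<longrightarrow>
        dist (T x) (T y) + dist (T y) (T z) + dist (T x) (T z)
          \<le> \<phi> (Max {dist x y, dist y z, dist z x})
            + F (dist x (T x)) (dist y (T y)) (dist z (T z))"
  shows "Cauchy (\<lambda>k. (T^^k) x0)"
proof (unfold Cauchy_def, intro allI impI)
  fix e :: real assume e: "e > 0"
  define \<epsilon> where "\<epsilon> = e/2"
  define x where "x = (\<lambda>k. (T^^k) x0)"
  have xs: "T (x k) = x (Suc k)" for k by (simp add: x_def)
  have ep: "\<epsilon> > 0" using e by (simp add: \<epsilon>_def)
  have "\<phi> \<epsilon> < \<epsilon>" using phi_less ep by blast
  define \<eta> where "\<eta> = (\<epsilon> - \<phi> \<epsilon>)/2"
  have eta: "\<eta> > 0" using \<open>\<phi> \<epsilon> < \<epsilon>\<close> by (simp add: \<eta>_def)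
  obtain \<delta>0 where d0: "\<delta>0 > 0" and hd0: "\<forall>s\<ge>0. \<bar>s-\<epsilon>\<bar> < \<delta>0 \<longrightarrow> \<phi> s < \<phi> \<epsilon> + \<eta>"
    using phi_usc ep eta unfolding usc_nonneg_def by (meson less_imp_le)
  define \<delta> where "\<delta> = min \<delta>0 \<epsilon>"
  define \<gamma> where "\<gamma> = min \<eta> \<delta> / 3"
  have dpos: "\<delta> > 0" using d0 ep by (simp add: \<delta>_def)
  have gpos: "\<gamma> > 0" using dpos eta by (simp add: \<gamma>_def)
  obtain \<rho> where rho: "\<rho> > 0" and Fr: "\<forall>a b c. 0\<le>a \<longrightarrow> a<\<rho> \<longrightarrow> 0\<le>b \<longrightarrow> b<\<rho> \<longrightarrow> 0\<le>c \<longrightarrow> c<\<rho> \<longrightarrow> F a b c < \<gamma>"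
    using Fsm gpos by blast
  have "(\<lambda>n. dist (x (Suc n)) (x n)) \<longlonglongrightarrow> 0"
    using asreg unfolding asymptotically_regular_def x_def by simp
  then obtain N where hN0: "\<forall>n\<ge>N. norm (dist (x (Suc n)) (x n) - 0) < min \<gamma> \<rho>"
    using gpos rho unfolding LIMSEQ_iff by (metis min_less_iff_conj)
  have hN: "dist (x n) (x (Suc n)) < \<gamma>" "dist (x n) (x (Suc n)) < \<rho>" if "n \<ge> N" for n
    using hN0 that by (auto simp: dist_commute)
  have pos: "dist (x k) (x (Suc k)) > 0" for k
    using nofix xs[of k] by (metis zero_less_dist_iff)
  have key: "dist (x n) (x (n + j)) \<le> \<epsilon>" if nN: "n \<ge> N" for n j
  proof (induction j)
    case 0 show ?case using ep by simp
  next
    case (Suc j)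
    define m where "m = n + j"
    have IH: "dist (x n) (x m) \<le> \<epsilon>" using Suc m_def by simp
    have g1: "dist (x n) (x (Suc n)) < \<gamma>" "dist (x n) (x (Suc n)) < \<rho>" using hN nN by auto
    have g2: "dist (x (Suc n)) (x (Suc (Suc n))) < \<gamma>" "dist (x (Suc n)) (x (Suc (Suc n))) < \<rho>"
      using hN nN by auto
    have g3: "dist (x m) (x (Suc m)) < \<rho>" using hN nN m_def by auto
    have gd: "3 * \<gamma> \<le> \<eta>" "3 * \<gamma> \<le> \<delta>" "\<delta> \<le> \<epsilon>" "\<delta> \<le> \<delta>0" by (auto simp: \<gamma>_def \<delta>_def)
    have "dist (x n) (x (Suc m)) \<le> \<epsilon>"
    proof -
      consider "x m = x n" | "x m = x (Suc n)" | "distinct [x n, x m, x (Suc n)]"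
        using pos[of n] by fastforce
      then show ?thesis
      proof cases
        case 1
        then have "x (Suc m) = x (Suc n)" by (metis xs)
        then show ?thesis using g1 gd gpos by simp
      next
        case 2
        then have "x (Suc m) = x (Suc (Suc n))" by (metis xs)
        have "dist (x n) (x (Suc (Suc n))) \<le> dist (x n) (x (Suc n)) + dist (x (Suc n)) (x (Suc (Suc n)))"
          by (rule dist_triangle)
        then have "dist (x n) (x (Suc (Suc n))) \<le> \<epsilon>" using g1(1) g2(1) gd gpos by linarith
        then show ?thesis using \<open>x (Suc m) = x (Suc (Suc n))\<close> by simp
      next
        case 3
        have c: "dist (x (Suc n)) (x (Suc m)) + dist (x (Suc m)) (x (Suc (Suc n))) + dist (x (Suc n)) (x (Suc (Suc n)))
          \<le> \<phi> (Max {dist (x n) (x m), dist (x m) (x (Suc n)), dist (x (Suc n)) (x n)})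
            + F (dist (x n) (x (Suc n))) (dist (x m) (x (Suc m))) (dist (x (Suc n)) (x (Suc (Suc n))))"
          using contr[rule_format, OF 3] unfolding xs .
        define M where "M = Max {dist (x n) (x m), dist (x m) (x (Suc n)), dist (x (Suc n)) (x n)}"
        have M_eq: "M = max (dist (x n) (x m)) (max (dist (x m) (x (Suc n))) (dist (x (Suc n)) (x n)))"
          by (simp add: M_def)
        have "dist (x (Suc n)) (x n) \<le> M" by (simp add: M_eq)
        then have Mpos: "M > 0" using pos[of n] dist_commute[of "x n" "x (Suc n)"] by linarith
        have "dist (x m) (x (Suc n)) \<le> dist (x m) (x n) + dist (x n) (x (Suc n))" by (rule dist_triangle)
        then have Mle: "M < \<epsilon> + \<delta>" using IH g1 gd gpos by (simp add: M_eq dist_commute)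
        have phiM: "\<phi> M \<le> \<epsilon> - 3 * \<gamma>"
        proof (cases "\<bar>M - \<epsilon>\<bar> < \<delta>0")
          case True
          then have "\<phi> M < \<phi> \<epsilon> + \<eta>" using hd0 Mpos by simp
          then show ?thesis using gd unfolding \<eta>_def by argo
        next
          case False
          then have "M \<le> \<epsilon> - \<delta>0" using Mle gd by linarith
          moreover have "\<phi> M < M" using phi_less Mpos by blast
          ultimately show ?thesis using gd by linarith
        qed
        have Fs: "F (dist (x n) (x (Suc n))) (dist (x m) (x (Suc m))) (dist (x (Suc n)) (x (Suc (Suc n)))) < \<gamma>"
          using Fr g1 g2 g3 by simp
        have "dist (x n) (x (Suc m)) \<le> dist (x n) (x (Suc n)) + dist (x (Suc n)) (x (Suc m))"
          by (rule dist_triangle)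
        moreover have "0 \<le> dist (x (Suc m)) (x (Suc (Suc n)))" "0 \<le> dist (x (Suc n)) (x (Suc (Suc n)))" by auto
        ultimately show ?thesis using c Fs phiM g1 gpos unfolding M_def[symmetric] by linarith
      qed
    qed
    then show ?case by (simp add: m_def)
  qed
  have key2: "dist (x n) (x m) \<le> \<epsilon>" if "n \<ge> N" "m \<ge> n" for n m
    using key[of n "m - n"] that by simp
  show "\<exists>M. \<forall>m\<ge>M. \<forall>n\<ge>M. dist ((T ^^ m) x0) ((T ^^ n) x0) < e"
  proof (intro exI[of _ N] allI impI)
    fix m n assume "m \<ge> N" "n \<ge> N"
    have "dist (x m) (x n) \<le> \<epsilon>"
    proof (cases "m \<le> n")
      case True
      then show ?thesis using key2[of m n] \<open>m \<ge> N\<close> by blast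
    next
      case False
      then have "dist (x n) (x m) \<le> \<epsilon>" using key2[of n m] \<open>n \<ge> N\<close> by simp
      then show ?thesis using dist_commute[of "x m" "x n"] by linarith
    qed
    moreover have "dist ((T ^^ m) x0) ((T ^^ n) x0) = dist (x m) (x n)" unfolding x_def by (rule refl)
    moreover have "\<epsilon> < e" using e unfolding \<epsilon>_def by simp
    ultimately show "dist ((T ^^ m) x0) ((T ^^ n) x0) < e" by linarith
  qed
qed

theorem theorem4p11:
  fixes T :: "'a::complete_space \<Rightarrow> 'a"
    and \<phi> :: "real \<Rightarrow> real"
    and F :: "real \<Rightarrow> real \<Rightarrow> real \<Rightarrow> real"
  assumes three: "\<exists>a b c :: 'a. distinct [a, b, c]"
    and contT: "continuous_on UNIV T"
    and asreg: "asymptotically_regular T"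
    and phi_nonneg: "\<forall>t\<ge>0. \<phi> t \<ge> 0"
    and phi_usc: "usc_nonneg \<phi>"
    and phi_less: "\<forall>t>0. \<phi> t < t"
    and F_nonneg: "\<forall>a\<ge>0. \<forall>b\<ge>0. \<forall>c\<ge>0. F a b c \<ge> 0"
    and F_zero: "F 0 0 0 = 0"
    and F_cont: "cont_at_origin3 F"
    and contr: "\<forall>x y z. distinct [x, y, z] \<longrightarrow>
        dist (T x) (T y) + dist (T y) (T z) + dist (T x) (T z)
          \<le> \<phi> (Max {dist x y, dist y z, dist z x})
            + F (dist x (T x)) (dist y (T y)) (dist z (T z))"
  shows "(\<exists>x. T x = x) \<and> finite {x. T x = x} \<and> card {x. T x = x} \<le> 2"
proof (intro conjI)
  have no3: "\<not>(\<exists>a b c. distinct [a,b,c] \<and> a\<in>{x. T x = x} \<and> b\<in>{x. T x = x} \<and> c\<in>{x. T x = x})"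
  proof
    assume "\<exists>a b c. distinct [a,b,c] \<and> a\<in>{x. T x = x} \<and> b\<in>{x. T x = x} \<and> c\<in>{x. T x = x}"
    then obtain a b c where d: "distinct [a,b,c]" and f: "T a = a" "T b = b" "T c = c" by auto
    have H: "dist a b + dist b c + dist a c \<le> \<phi> (Max {dist a b, dist b c, dist c a}) + F 0 0 0"
      using contr[rule_format, OF d] f by simp
    define M where "M = Max {dist a b, dist b c, dist c a}"
    have M_eq: "M = max (dist a b) (max (dist b c) (dist c a))" by (simp add: M_def)
    have "dist a b \<le> M" by (simp add: M_eq)
    moreover have "dist a b > 0" using d by simp
    ultimately have "M > 0" by linarith
    then have "\<phi> M < M" using phi_less by blast
    moreover have "M \<le> dist a b + dist b c + dist a c"
    proof -
      have "dist c a = dist a c" by (rule dist_commute)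
      moreover have "0 \<le> dist a b" "0 \<le> dist b c" "0 \<le> dist a c" by auto
      ultimately show ?thesis unfolding M_eq by linarith
    qed
    ultimately show False using H F_zero unfolding M_def[symmetric] by linarith
  qed
  then show "finite {x. T x = x}" "card {x. T x = x} \<le> 2" using fin3 by blast+
next
  show "\<exists>x. T x = x"
  proof (rule ccontr)
    assume "\<not> (\<exists>x. T x = x)"
    then have nofix: "\<forall>x. T x \<noteq> x" by blast
    define x0 :: 'a where "x0 = undefined"
    have Fsm: "\<forall>\<gamma>>0. \<exists>\<rho>>0. \<forall>a b c. 0\<le>a \<longrightarrow> a<\<rho> \<longrightarrow> 0\<le>b \<longrightarrow> b<\<rho> \<longrightarrow> 0\<le>c \<longrightarrow> c<\<rho> \<longrightarrow> F a b c < \<gamma>"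
      using F_small[OF F_cont F_zero] by blast
    have "Cauchy (\<lambda>k. (T^^k) x0)"
      by (rule orbit_cauchy[OF nofix asreg phi_usc phi_less Fsm contr])
    then obtain p where p: "(\<lambda>k. (T^^k) x0) \<longlonglongrightarrow> p"
      using convergent_eq_Cauchy convergent_def by blast
    have "(\<lambda>k. T ((T^^k) x0)) \<longlonglongrightarrow> T p"
    proof -
      have "isCont T p" using contT by (simp add: continuous_on_eq_continuous_at)
      then show ?thesis using isCont_tendsto_compose[OF _ p] by blast
    qed
    moreover have "(\<lambda>k. T ((T^^k) x0)) \<longlonglongrightarrow> p"
      using LIMSEQ_Suc[OF p] by simp
    ultimately have "T p = p" using LIMSEQ_unique by blast
    then show False using nofix by blast
  qed
qed

end
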